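(* Let $L$ be a finite-dimensional Lie algebra over a field $F$ and let $M$ be a maximal subalgebra of $L$. Then the number $\dim(C/k(C))$, where $C$ is an ideal completion of $M$ in $L$, does not depend on the choice of the ideal completion $C$; that is, the ideal index $\eta(L:M)$ is well-defined.
   Context: For a nonzero subalgebra $B$ of $L$, the strict core $k(B)$ is the sum of all ideals of $L$ that are proper subalgebras of $B$ (it is $0$ if there are none). A subalgebra $C$ of $L$ is a completion of $M$ if $C\not\subseteq M$ but every proper subalgebra of $C$ that is an ideal of $L$ is contained in $M$. An ideal completion of $M$ is a completion of $M$ which is an ideal of $L$ (such exist for every maximal subalgebra). The ideal index $\eta(L:M)$ is defined as $\dim(C/k(C))$ for an ideal completion $C$ of $M$. *)

theory Defs
  imports Complex_Main
begin

text \<open>A Lie algebra L over a field 'k is modelled as the whole carrier type 'v,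
  a vector space over 'k with scalar multiplication s, together with a bracket br
  which is bilinear, alternating and satisfies the Jacobi identity.\<close>

definition lie_algebra :: "('k::field \<Rightarrow> 'v::ab_group_add \<Rightarrow> 'v) \<Rightarrow> ('v \<Rightarrow> 'v \<Rightarrow> 'v) \<Rightarrow> bool" where
  "lie_algebra s br \<longleftrightarrow> vector_space s
     \<and> (\<forall>x y z. br (x + y) z = br x z + br y z)
     \<and> (\<forall>x y z. br x (y + z) = br x y + br x z)
     \<and> (\<forall>a x y. br (s a x) y = s a (br x y))
     \<and> (\<forall>a x y. br x (s a y) = s a (br x y))
     \<and> (\<forall>x. br x x = 0)
     \<and> (\<forall>x y z. br x (br y z) + br y (br z x) + br z (br x y) = 0)"

definition finite_dim :: "('k::field \<Rightarrow> 'v::ab_group_add \<Rightarrow> 'v) \<Rightarrow> bool" where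
  "finite_dim s \<longleftrightarrow> (\<exists>B. finite B \<and> module.span s B = UNIV)"

definition lie_subalgebra :: "('k::field \<Rightarrow> 'v::ab_group_add \<Rightarrow> 'v) \<Rightarrow> ('v \<Rightarrow> 'v \<Rightarrow> 'v) \<Rightarrow> 'v set \<Rightarrow> bool" where
  "lie_subalgebra s br B \<longleftrightarrow> module.subspace s B \<and> (\<forall>x\<in>B. \<forall>y\<in>B. br x y \<in> B)"

definition lie_ideal :: "('k::field \<Rightarrow> 'v::ab_group_add \<Rightarrow> 'v) \<Rightarrow> ('v \<Rightarrow> 'v \<Rightarrow> 'v) \<Rightarrow> 'v set \<Rightarrow> bool" where
  "lie_ideal s br I \<longleftrightarrow> module.subspace s I \<and> (\<forall>x. \<forall>y\<in>I. br x y \<in> I)"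

definition maximal_subalgebra :: "('k::field \<Rightarrow> 'v::ab_group_add \<Rightarrow> 'v) \<Rightarrow> ('v \<Rightarrow> 'v \<Rightarrow> 'v) \<Rightarrow> 'v set \<Rightarrow> bool" where
  "maximal_subalgebra s br M \<longleftrightarrow> lie_subalgebra s br M \<and> M \<noteq> UNIV
     \<and> (\<forall>B. lie_subalgebra s br B \<and> M \<subseteq> B \<longrightarrow> B = M \<or> B = UNIV)"

definition strict_core :: "('k::field \<Rightarrow> 'v::ab_group_add \<Rightarrow> 'v) \<Rightarrow> ('v \<Rightarrow> 'v \<Rightarrow> 'v) \<Rightarrow> 'v set \<Rightarrow> 'v set" where
  "strict_core s br B = module.span s (\<Union>{I. lie_ideal s br I \<and> lie_subalgebra s br I \<and> I \<subset> B})"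

definition completion :: "('k::field \<Rightarrow> 'v::ab_group_add \<Rightarrow> 'v) \<Rightarrow> ('v \<Rightarrow> 'v \<Rightarrow> 'v) \<Rightarrow> 'v set \<Rightarrow> 'v set \<Rightarrow> bool" where
  "completion s br M C \<longleftrightarrow> lie_subalgebra s br C \<and> \<not> C \<subseteq> M
     \<and> (\<forall>D. lie_subalgebra s br D \<and> D \<subset> C \<and> lie_ideal s br D \<longrightarrow> D \<subseteq> M)"

definition ideal_completion :: "('k::field \<Rightarrow> 'v::ab_group_add \<Rightarrow> 'v) \<Rightarrow> ('v \<Rightarrow> 'v \<Rightarrow> 'v) \<Rightarrow> 'v set \<Rightarrow> 'v set \<Rightarrow> bool" where
  "ideal_completion s br M C \<longleftrightarrow> completion s br M C \<and> lie_ideal s br C"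

text \<open>dim(C / k(C)) = dim C - dim k(C), since k(C) is a subspace of C.\<close>
definition quot_core_dim :: "('k::field \<Rightarrow> 'v::ab_group_add \<Rightarrow> 'v) \<Rightarrow> ('v \<Rightarrow> 'v \<Rightarrow> 'v) \<Rightarrow> 'v set \<Rightarrow> nat" where
  "quot_core_dim s br C = vector_space.dim s C - vector_space.dim s (strict_core s br C)"

end

theory Submission
  imports Defs
begin

lemma la_vs: "lie_algebra s br \<Longrightarrow> vector_space s"
  by (simp add: lie_algebra_def)

lemma la_add_r: "lie_algebra s br \<Longrightarrow> br x (y + z) = br x y + br x z"
  by (simp add: lie_algebra_def)
lemma la_add_l: "lie_algebra s br \<Longrightarrow> br (x + y) z = br x z + br y z"
  by (simp add: lie_algebra_def)
lemma la_scale_r: "lie_algebra s br \<Longrightarrow> br x (s a y) = s a (br x y)"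
  by (simp add: lie_algebra_def)

lemma la_zero_r: "lie_algebra s br \<Longrightarrow> br x 0 = 0"
proof -
  assume l: "lie_algebra s br"
  have "br x (0 + 0) = br x 0 + br x 0" by (rule la_add_r[OF l])
  then show ?thesis by simp
qed

lemma la_antisym: "lie_algebra s br \<Longrightarrow> br x y = - br y x"
proof -
  assume l: "lie_algebra s br"
  have a: "br z z = 0" for z using l by (simp add: lie_algebra_def)
  have "br (x + y) (x + y) = br x x + br x y + (br y x + br y y)"
    using la_add_l[OF l] la_add_r[OF l] by (simp add: add.assoc)
  then have "br x y + br y x = 0" using a by simp
  then show ?thesis by (simp add: eq_neg_iff_add_eq_0)
qed

lemma ideal_sub: "lie_ideal s br I \<Longrightarrow> lie_subalgebra s br I"
  by (simp add: lie_ideal_def lie_subalgebra_def)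

lemma ideal_left: "lie_algebra s br \<Longrightarrow> lie_ideal s br I \<Longrightarrow> y \<in> I \<Longrightarrow> br y x \<in> I"
proof -
  assume l: "lie_algebra s br" and I: "lie_ideal s br I" and y: "y \<in> I"
  interpret vector_space s by (rule la_vs[OF l])
  have "br x y \<in> I" using I y by (simp add: lie_ideal_def)
  then have "- br x y \<in> I" using I subspace_neg by (simp add: lie_ideal_def)
  then show ?thesis using la_antisym[OF l, of y x] by simp
qed

lemma ideal_inter: "lie_algebra s br \<Longrightarrow> lie_ideal s br I \<Longrightarrow> lie_ideal s br J \<Longrightarrow> lie_ideal s br (I \<inter> J)"
proof -
  assume l: "lie_algebra s br"
  interpret vector_space s by (rule la_vs[OF l])
  show "lie_ideal s br I \<Longrightarrow> lie_ideal s br J \<Longrightarrow> lie_ideal s br (I \<inter> J)"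
    by (auto simp: lie_ideal_def subspace_inter)
qed

lemma ideal_sum: "lie_algebra s br \<Longrightarrow> lie_ideal s br I \<Longrightarrow> lie_ideal s br J
   \<Longrightarrow> lie_ideal s br {x + y |x y. x \<in> I \<and> y \<in> J}"
proof -
  assume l: "lie_algebra s br" and I: "lie_ideal s br I" and J: "lie_ideal s br J"
  interpret vector_space s by (rule la_vs[OF l])
  have "subspace {x + y |x y. x \<in> I \<and> y \<in> J}"
    using I J by (simp add: lie_ideal_def subspace_sums)
  moreover have "br z w \<in> {x + y |x y. x \<in> I \<and> y \<in> J}" if wIJ: "w \<in> {x + y |x y. x \<in> I \<and> y \<in> J}" for z w
  proof -
    obtain a b where w: "w = a + b" "a \<in> I" "b \<in> J" using wIJ by blast
    have "br z w = br z a + br z b" using w la_add_r[OF l] by simp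
    moreover have "br z a \<in> I" "br z b \<in> J" using I J w by (auto simp: lie_ideal_def)
    ultimately show ?thesis by blast
  qed
  ultimately show ?thesis by (simp add: lie_ideal_def)
qed

lemma sub_sum: "lie_algebra s br \<Longrightarrow> lie_ideal s br I \<Longrightarrow> lie_subalgebra s br M
   \<Longrightarrow> lie_subalgebra s br {x + y |x y. x \<in> I \<and> y \<in> M}"
proof -
  assume l: "lie_algebra s br" and I: "lie_ideal s br I" and M: "lie_subalgebra s br M"
  interpret vector_space s by (rule la_vs[OF l])
  have sI: "subspace I" and sM: "subspace M" using I M by (auto simp: lie_ideal_def lie_subalgebra_def)
  have "subspace {x + y |x y. x \<in> I \<and> y \<in> M}"
    using sI sM by (simp add: subspace_sums)
  moreover have "br z w \<in> {x + y |x y. x \<in> I \<and> y \<in> M}"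
    if zz: "z \<in> {x + y |x y. x \<in> I \<and> y \<in> M}" and ww: "w \<in> {x + y |x y. x \<in> I \<and> y \<in> M}" for z w
  proof -
    obtain a b where w: "w = a + b" "a \<in> I" "b \<in> M" using ww by blast
    obtain c d where z: "z = c + d" "c \<in> I" "d \<in> M" using zz by blast
    have e: "br z w = (br c a + br c b + br d a) + br d b"
      using w z la_add_r[OF l] la_add_l[OF l] by (simp add: algebra_simps)
    have "br c a \<in> I" "br d a \<in> I" using I w z by (auto simp: lie_ideal_def)
    moreover have "br c b \<in> I" using ideal_left[OF l I z(2)] .
    ultimately have "br c a + br c b + br d a \<in> I" using sI subspace_add by blast
    moreover have "br d b \<in> M" using M w z by (auto simp: lie_subalgebra_def)
    ultimately show ?thesis using e by blast
  qed
  ultimately show ?thesis by (simp add: lie_subalgebra_def)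
qed

lemma ideal_span_union:
  assumes l: "lie_algebra s br" and F: "\<And>I. I \<in> F \<Longrightarrow> lie_ideal s br I"
  shows "lie_ideal s br (module.span s (\<Union>F))"
proof -
  interpret vector_space s by (rule la_vs[OF l])
  have "br x y \<in> span (\<Union>F)" if y: "y \<in> span (\<Union>F)" for x y
  proof -
    let ?P = "{y. br x y \<in> span (\<Union>F)}"
    have "subspace ?P"
    proof (rule subspaceI)
      show "0 \<in> ?P" using la_zero_r[OF l] span_zero by simp
      show "a + b \<in> ?P" if "a \<in> ?P" "b \<in> ?P" for a b
        using that la_add_r[OF l] span_add by simp
      show "s c a \<in> ?P" if "a \<in> ?P" for c a
        using that la_scale_r[OF l] span_scale by simp
    qed
    moreover have "\<Union>F \<subseteq> ?P"
    proof
      fix z assume "z \<in> \<Union>F"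
      then obtain I where "I \<in> F" "z \<in> I" by blast
      then have "br x z \<in> I" using F by (auto simp: lie_ideal_def)
      then show "z \<in> ?P" using \<open>I \<in> F\<close> span_superset by blast
    qed
    ultimately have "span (\<Union>F) \<subseteq> ?P" by (rule span_minimal[rotated])
    then show ?thesis using y by blast
  qed
  then show ?thesis by (simp add: lie_ideal_def)
qed

lemma core_props:
  assumes l: "lie_algebra s br" and Mm: "maximal_subalgebra s br M"
    and C: "ideal_completion s br M C"
  shows "lie_ideal s br (strict_core s br C)" "strict_core s br C \<subseteq> M"
    "strict_core s br C \<subseteq> C"
    "\<And>J. lie_ideal s br J \<Longrightarrow> J \<subseteq> C \<Longrightarrow> J \<noteq> C \<Longrightarrow> J \<subseteq> strict_core s br C"
proof -
  interpret vector_space s by (rule la_vs[OF l])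
  let ?F = "{I. lie_ideal s br I \<and> lie_subalgebra s br I \<and> I \<subset> C}"
  have kdef: "strict_core s br C = span (\<Union>?F)" by (simp add: strict_core_def)
  show "lie_ideal s br (strict_core s br C)" unfolding kdef
    by (rule ideal_span_union[OF l]) auto
  have sM: "subspace M" using Mm by (simp add: maximal_subalgebra_def lie_subalgebra_def)
  have sC: "subspace C" using C by (simp add: ideal_completion_def lie_ideal_def)
  have "\<Union>?F \<subseteq> M" using C by (auto simp: ideal_completion_def completion_def)
  then show "strict_core s br C \<subseteq> M" unfolding kdef using sM span_minimal by blast
  have "\<Union>?F \<subseteq> C" by auto
  then show "strict_core s br C \<subseteq> C" unfolding kdef using sC span_minimal by blast
  fix J assume "lie_ideal s br J" "J \<subseteq> C" "J \<noteq> C"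
  then have "J \<in> ?F" using ideal_sub by auto
  then have "J \<subseteq> \<Union>?F" by blast
  then show "J \<subseteq> strict_core s br C" unfolding kdef using span_superset by blast
qed

lemma min_lemma:
  assumes l: "lie_algebra s br" and Mm: "maximal_subalgebra s br M"
    and C: "ideal_completion s br M C"
    and N: "lie_ideal s br N" "strict_core s br C \<subseteq> N"
    and J: "lie_ideal s br J" "N \<subseteq> J" "J \<subseteq> {x + y |x y. x \<in> C \<and> y \<in> N}"
  shows "J = N \<or> J = {x + y |x y. x \<in> C \<and> y \<in> N}"
proof -
  interpret vector_space s by (rule la_vs[OF l])
  have sJ: "subspace J" using J by (simp add: lie_ideal_def)
  have iC: "lie_ideal s br C" using C by (simp add: ideal_completion_def)
  show ?thesis
  proof (cases "C \<subseteq> J")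
    case True
    have "{x + y |x y. x \<in> C \<and> y \<in> N} \<subseteq> J"
      using True J(2) sJ subspace_add by blast
    then show ?thesis using J by blast
  next
    case False
    have "J \<inter> C \<subseteq> strict_core s br C"
      using core_props(4)[OF l Mm C, of "J \<inter> C"] ideal_inter[OF l J(1) iC] False by blast
    then have JC: "J \<inter> C \<subseteq> N" using N by blast
    have "J \<subseteq> N"
    proof
      fix x assume x: "x \<in> J"
      then obtain c n where cn: "x = c + n" "c \<in> C" "n \<in> N" using J(3) by blast
      have "x - n \<in> J" using subspace_diff[OF sJ x] cn J(2) by blast
      then have "c \<in> J" using cn by simp
      then have "c \<in> N" using JC cn by blast
      then show "x \<in> N" using cn N(1) subspace_add by (auto simp: lie_ideal_def)
    qed
    then show ?thesis using J by blast
  qed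
qed

theorem corollary2p2:
  fixes s :: "'k::field \<Rightarrow> 'v::ab_group_add \<Rightarrow> 'v" and br :: "'v \<Rightarrow> 'v \<Rightarrow> 'v"
    and M C1 C2 :: "'v set"
  assumes "lie_algebra s br" and "finite_dim s"
    and "maximal_subalgebra s br M"
    and "ideal_completion s br M C1" and "ideal_completion s br M C2"
  shows "quot_core_dim s br C1 = quot_core_dim s br C2"
proof -
  note l = assms(1) and Mm = assms(3) and C1 = assms(4) and C2 = assms(5)
  interpret vector_space s by (rule la_vs[OF l])
  obtain S where S: "finite S" "span S = UNIV" using assms(2) by (auto simp: finite_dim_def)
  obtain Bs where Bs: "Bs \<subseteq> S" "independent Bs" "S \<subseteq> span Bs"
    using maximal_independent_subset by blast
  have "span S \<subseteq> span Bs" using Bs(3) span_minimal subspace_span by blast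
  then have spB: "span Bs = UNIV" using S by auto
  interpret fd: finite_dimensional_vector_space s Bs
    by unfold_locales (use Bs S spB finite_subset in auto)
  define K1 where "K1 = strict_core s br C1"
  define K2 where "K2 = strict_core s br C2"
  define N where "N = {x + y |x y. x \<in> K1 \<and> y \<in> K2}"
  define A where "A = {x + y |x y. x \<in> C1 \<and> y \<in> N}"
  define B where "B = {x + y |x y. x \<in> C2 \<and> y \<in> N}"
  note P1 = core_props[OF l Mm C1, folded K1_def]
  note P2 = core_props[OF l Mm C2, folded K2_def]
  have iC1: "lie_ideal s br C1" and iC2: "lie_ideal s br C2"
    using C1 C2 by (auto simp: ideal_completion_def)
  have nC1: "\<not> C1 \<subseteq> M" and nC2: "\<not> C2 \<subseteq> M"
    using C1 C2 by (auto simp: ideal_completion_def completion_def)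
  have sub: "subspace X" if "lie_ideal s br X" for X using that by (simp add: lie_ideal_def)
  have sM: "subspace M" using Mm by (simp add: maximal_subalgebra_def lie_subalgebra_def)
  have subM: "lie_subalgebra s br M" using Mm by (simp add: maximal_subalgebra_def)
  have iN: "lie_ideal s br N" unfolding N_def by (rule ideal_sum[OF l P1(1) P2(1)])
  have NM: "N \<subseteq> M" unfolding N_def using P1(2) P2(2) sM subspace_add by blast
  have K1N: "K1 \<subseteq> N" unfolding N_def using subspace_0[OF sub[OF P2(1)]] by force
  have K2N: "K2 \<subseteq> N" unfolding N_def using subspace_0[OF sub[OF P1(1)]] by force
  have iA: "lie_ideal s br A" unfolding A_def by (rule ideal_sum[OF l iC1 iN])
  have iB: "lie_ideal s br B" unfolding B_def by (rule ideal_sum[OF l iC2 iN])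
  have NA: "N \<subseteq> A" unfolding A_def using subspace_0[OF sub[OF iC1]] by force
  have NB: "N \<subseteq> B" unfolding B_def using subspace_0[OF sub[OF iC2]] by force
  have C1A: "C1 \<subseteq> A" unfolding A_def using subspace_0[OF sub[OF iN]] by force
  have C2B: "C2 \<subseteq> B" unfolding B_def using subspace_0[OF sub[OF iN]] by force
  have minA: "J = N \<or> J = A" if "lie_ideal s br J" "N \<subseteq> J" "J \<subseteq> A" for J
    using min_lemma[OF l Mm C1 iN _ that[unfolded A_def]] K1N unfolding K1_def A_def by blast
  have minB: "J = N \<or> J = B" if "lie_ideal s br J" "N \<subseteq> J" "J \<subseteq> B" for J
    using min_lemma[OF l Mm C2 iN _ that[unfolded B_def]] K2N unfolding K2_def B_def by blast
  have int1: "C1 \<inter> N = K1"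
  proof
    show "K1 \<subseteq> C1 \<inter> N" using P1(3) K1N by blast
    have "C1 \<inter> N \<noteq> C1" using nC1 NM by blast
    then show "C1 \<inter> N \<subseteq> K1" using P1(4)[OF ideal_inter[OF l iC1 iN]] by blast
  qed
  have int2: "C2 \<inter> N = K2"
  proof
    show "K2 \<subseteq> C2 \<inter> N" using P2(3) K2N by blast
    have "C2 \<inter> N \<noteq> C2" using nC2 NM by blast
    then show "C2 \<inter> N \<subseteq> K2" using P2(4)[OF ideal_inter[OF l iC2 iN]] by blast
  qed
  have dA: "dim A + dim K1 = dim C1 + dim N"
    using fd.dim_sums_Int[OF sub[OF iC1] sub[OF iN]] int1 unfolding A_def by simp
  have dB: "dim B + dim K2 = dim C2 + dim N"
    using fd.dim_sums_Int[OF sub[OF iC2] sub[OF iN]] int2 unfolding B_def by simp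
  have le1: "dim K1 \<le> dim C1" using fd.dim_subset[OF P1(3)] .
  have le2: "dim K2 \<le> dim C2" using fd.dim_subset[OF P2(3)] .
  have q1: "quot_core_dim s br C1 = dim C1 - dim K1" by (simp add: quot_core_dim_def K1_def)
  have q2: "quot_core_dim s br C2 = dim C2 - dim K2" by (simp add: quot_core_dim_def K2_def)
  have AM: "\<not> A \<subseteq> M" using C1A nC1 by blast
  have BM: "\<not> B \<subseteq> M" using C2B nC2 by blast
  have iAB: "lie_ideal s br (A \<inter> B)" by (rule ideal_inter[OF l iA iB])
  have AUM: "{x + y |x y. x \<in> A \<and> y \<in> M} = UNIV" and BUM: "{x + y |x y. x \<in> B \<and> y \<in> M} = UNIV"
  proof -
    have g: "{x + y |x y. x \<in> X \<and> y \<in> M} = UNIV" if iX: "lie_ideal s br X" and XM: "\<not> X \<subseteq> M" for X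
    proof -
      have "lie_subalgebra s br {x + y |x y. x \<in> X \<and> y \<in> M}"
        by (rule sub_sum[OF l iX subM])
      moreover have "M \<subseteq> {x + y |x y. x \<in> X \<and> y \<in> M}"
        using subspace_0[OF sub[OF iX]] by force
      moreover have "{x + y |x y. x \<in> X \<and> y \<in> M} \<noteq> M"
      proof
        assume h: "{x + y |x y. x \<in> X \<and> y \<in> M} = M"
        have "X \<subseteq> {x + y |x y. x \<in> X \<and> y \<in> M}" using subspace_0[OF sM] by force
        then show False using h XM by blast
      qed
      ultimately show ?thesis using Mm unfolding maximal_subalgebra_def by blast
    qed
    show "{x + y |x y. x \<in> A \<and> y \<in> M} = UNIV" by (rule g[OF iA AM])
    show "{x + y |x y. x \<in> B \<and> y \<in> M} = UNIV" by (rule g[OF iB BM])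
  qed
  have key: "dim X + dim M = dim (UNIV::'v set) + dim N"
    if iX: "lie_ideal s br X" and NX: "N \<subseteq> X" and XM: "\<not> X \<subseteq> M"
      and minX: "\<And>J. lie_ideal s br J \<Longrightarrow> N \<subseteq> J \<Longrightarrow> J \<subseteq> X \<Longrightarrow> J = N \<or> J = X"
      and iY: "lie_ideal s br Y" and XY: "X \<inter> Y = N"
      and YM: "{x + y |x y. x \<in> Y \<and> y \<in> M} = UNIV"
      and XMU: "{x + y |x y. x \<in> X \<and> y \<in> M} = UNIV"
    for X Y
  proof -
    have iXM: "lie_ideal s br (X \<inter> M)"
    proof -
      have "br x y \<in> X \<inter> M" if y: "y \<in> X \<inter> M" for x y
      proof -
        have "x \<in> {x + y |x y. x \<in> Y \<and> y \<in> M}" using YM by simp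
        then obtain a m where am: "x = a + m" "a \<in> Y" "m \<in> M" by blast
        have e: "br x y = br a y + br m y" using am la_add_l[OF l] by simp
        have "br a y \<in> X" using iX y by (auto simp: lie_ideal_def)
        moreover have "br a y \<in> Y" using ideal_left[OF l iY am(2)] .
        ultimately have "br a y \<in> M" using XY NM by blast
        moreover have "br m y \<in> M" using subM am y by (auto simp: lie_subalgebra_def)
        ultimately have "br x y \<in> M" using e sM subspace_add by metis
        moreover have "br x y \<in> X" using iX y by (auto simp: lie_ideal_def)
        ultimately show ?thesis by blast
      qed
      then show ?thesis using iX sM subspace_inter by (auto simp: lie_ideal_def)
    qed
    have "X \<inter> M = N" using minX[OF iXM] NX NM XM by blast
    then show ?thesis
      using fd.dim_sums_Int[OF sub[OF iX] sM] XMU by simp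
  qed
  have "dim A = dim B"
  proof (cases "A \<inter> B = N")
    case True
    have BA: "B \<inter> A = N" using True by (simp add: Int_commute)
    have "dim A + dim M = dim (UNIV::'v set) + dim N"
      by (rule key[OF iA NA AM minA iB True BUM AUM])
    moreover have "dim B + dim M = dim (UNIV::'v set) + dim N"
      by (rule key[OF iB NB BM minB iA BA AUM BUM])
    ultimately show ?thesis by simp
  next
    case False
    have "A \<inter> B = A" using minA[OF iAB] NA NB False by blast
    moreover have "A \<inter> B = B" using minB[OF iAB] NA NB False by blast
    ultimately show ?thesis by simp
  qed
  then show ?thesis using q1 q2 dA dB le1 le2 by simp
qed

end
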